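(* Let $\mathcal{S}$ be a state space. Suppose there exists a state $s_0\in\mathcal{S}$ and a number $\lambda_0$ such that $e(s_0)=\lambda_0$ for all pure indecomposable effects $e$ on $\mathcal{S}$. Then $\lambda_{max}(\mathsf{M})=1/\lambda_0$ for every indecomposable measurement $\mathsf{M}$ on $\mathcal{S}$, and consequently $\lambda_{max}(\mathcal{S})=1/\lambda_0$.
   Context: General probabilistic theory setting: a state space $\mathcal{S}$ is a compact convex subset of a finite-dimensional real vector space, embedded as a base of a closed generating proper cone $V_+$ in a vector space $V$, so that $\mathcal{S}=\{x\in V_+ : u(x)=1\}$ for a strictly positive linear functional $u$ (the unit effect). An effect is a linear functional $e$ on $V$ with $0\le e(s)\le 1$ for all $s\in\mathcal{S}$; the set of effects is convex and its extreme points are called pure effects. A nonzero effect $e$ is indecomposable if whenever $e=e_1+e_2$ with $e_1,e_2$ nonzero effects, then $e=c_1e_1=c_2e_2$ for some $c_1,c_2>0$. For a linear functional $f$, $\|f\|=\max_{s\in\mathcal{S}}|f(s)|$. A measurement with finite outcome set $\Omega$ is a map $x\mapsto\mathsf{M}_x$ to effects with $\sum_x\mathsf{M}_x=u$; it is indecomposable if each of its nonzero effects is indecomposable. The decoding power is $\lambda_{max}(\mathsf{M})=\sum_x\|\mathsf{M}_x\|$, and the information storability of $\mathcal{S}$ is $\lambda_{max}(\mathcal{S})=\sup\{\lambda_{max}(\mathsf{M}) : \mathsf{M}$ a measurement on $\mathcal{S}$ with finite outcome set$\}$. *)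

theory Defs
  imports "HOL-Analysis.Analysis"
begin

text \<open>A state space: a compact convex nonempty set S in a finite-dimensional real
vector space V (type 'a), which is a base of the cone it generates:
there is a linear functional u (unit effect) with u = 1 on S, and S spans V
(so the cone V_+ = cone S is generating; it is then automatically closed and
proper since u > 0 on V_+ minus 0 and S is compact).\<close>
definition state_space :: "'a::euclidean_space set \<Rightarrow> ('a \<Rightarrow> real) \<Rightarrow> bool" where
  "state_space S u \<longleftrightarrow> S \<noteq> {} \<and> compact S \<and> convex S \<and> span S = UNIV
     \<and> linear u \<and> (\<forall>s\<in>S. u s = 1)"

definition effect :: "'a::euclidean_space set \<Rightarrow> ('a \<Rightarrow> real) \<Rightarrow> bool" where
  "effect S e \<longleftrightarrow> linear e \<and> (\<forall>s\<in>S. 0 \<le> e s \<and> e s \<le> 1)"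

definition pure_effect :: "'a::euclidean_space set \<Rightarrow> ('a \<Rightarrow> real) \<Rightarrow> bool" where
  "pure_effect S e \<longleftrightarrow> effect S e \<and>
     \<not> (\<exists>e1 e2 t. effect S e1 \<and> effect S e2 \<and> e1 \<noteq> e2 \<and> 0 < t \<and> t < 1 \<and>
            e = (\<lambda>v. t * e1 v + (1 - t) * e2 v))"

definition indecomposable_effect :: "'a::euclidean_space set \<Rightarrow> ('a \<Rightarrow> real) \<Rightarrow> bool" where
  "indecomposable_effect S e \<longleftrightarrow> effect S e \<and> e \<noteq> (\<lambda>_. 0) \<and>
     (\<forall>e1 e2. effect S e1 \<and> effect S e2 \<and> e1 \<noteq> (\<lambda>_. 0) \<and> e2 \<noteq> (\<lambda>_. 0)
        \<and> e = (\<lambda>v. e1 v + e2 v) \<longrightarrow>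
        (\<exists>c1 c2. c1 > 0 \<and> c2 > 0 \<and> e = (\<lambda>v. c1 * e1 v) \<and> e = (\<lambda>v. c2 * e2 v)))"

definition measurement ::
  "'a::euclidean_space set \<Rightarrow> ('a \<Rightarrow> real) \<Rightarrow> 'b set \<Rightarrow> ('b \<Rightarrow> 'a \<Rightarrow> real) \<Rightarrow> bool" where
  "measurement S u \<Omega> M \<longleftrightarrow> finite \<Omega> \<and> (\<forall>x\<in>\<Omega>. effect S (M x)) \<and>
     (\<forall>v. (\<Sum>x\<in>\<Omega>. M x v) = u v)"

definition indecomposable_measurement ::
  "'a::euclidean_space set \<Rightarrow> ('a \<Rightarrow> real) \<Rightarrow> 'b set \<Rightarrow> ('b \<Rightarrow> 'a \<Rightarrow> real) \<Rightarrow> bool" where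
  "indecomposable_measurement S u \<Omega> M \<longleftrightarrow> measurement S u \<Omega> M \<and>
     (\<forall>x\<in>\<Omega>. M x \<noteq> (\<lambda>_. 0) \<longrightarrow> indecomposable_effect S (M x))"

definition fnorm :: "'a set \<Rightarrow> ('a \<Rightarrow> real) \<Rightarrow> real" where
  "fnorm S f = (SUP s\<in>S. \<bar>f s\<bar>)"

definition decoding_power :: "'a set \<Rightarrow> 'b set \<Rightarrow> ('b \<Rightarrow> 'a \<Rightarrow> real) \<Rightarrow> real" where
  "decoding_power S \<Omega> M = (\<Sum>x\<in>\<Omega>. fnorm S (M x))"

text \<open>Information storability; finite outcome sets are taken as finite subsets of nat
(every finite outcome set is in bijection with one).\<close>
definition info_storability :: "'a::euclidean_space set \<Rightarrow> ('a \<Rightarrow> real) \<Rightarrow> real" where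
  "info_storability S u = Sup {decoding_power S \<Omega> M | (\<Omega> :: nat set) M. measurement S u \<Omega> M}"

end

theory Submission imports Defs begin

locale ssp =
  fixes S :: "'a::euclidean_space set" and u :: "'a \<Rightarrow> real" and B :: "'a set"
  assumes ss: "state_space S u"
    and BS: "B \<subseteq> S" and Bfin: "finite B" and Bspan: "span B = UNIV"
begin

definition "c = sum (\<lambda>x. x) B"
definition "K = {w. \<forall>s\<in>S. 0 \<le> w \<bullet> s}"
definition "Bs = {w\<in>K. w \<bullet> c = 1}"
definition "EP = {w. w extreme_point_of Bs}"
definition "mx w = Sup ((\<lambda>s. w \<bullet> s) ` S)"

lemma Sne: "S \<noteq> {}" and Scomp: "compact S" and ulin: "linear u" and u1: "\<And>s. s \<in> S \<Longrightarrow> u s = 1"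
  using ss unfolding state_space_def by auto

lemma inner_c: "w \<bullet> c = (\<Sum>b\<in>B. w \<bullet> b)"
  unfolding c_def by (simp add: inner_sum_right)

lemma pointed:
  assumes "w \<in> K" "w \<bullet> c = 0" shows "w = 0"
proof -
  have nn: "\<forall>b\<in>B. 0 \<le> w \<bullet> b" using assms(1) BS unfolding K_def by auto
  have z: "\<forall>b\<in>B. w \<bullet> b = 0"
    using sum_nonneg_eq_0_iff[OF Bfin, of "\<lambda>b. w \<bullet> b"] nn assms(2) inner_c by auto
  have "orthogonal w w"
    by (rule orthogonal_to_span[of w B]) (use z Bspan in \<open>auto simp: orthogonal_def\<close>)
  then show ?thesis by (simp add: orthogonal_def)
qed

lemma K_c_nonneg: "w \<in> K \<Longrightarrow> 0 \<le> w \<bullet> c"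
  unfolding inner_c K_def using BS by (auto intro!: sum_nonneg)

lemma Bs_bounded: "bounded Bs"
proof -
  have "\<forall>i\<in>Basis. \<exists>r. i = (\<Sum>b\<in>B. r b *\<^sub>R b)"
  proof
    fix i :: 'a
    have "i \<in> span B" using Bspan by simp
    then show "\<exists>r. i = (\<Sum>b\<in>B. r b *\<^sub>R b)" unfolding span_finite[OF Bfin] by auto
  qed
  then have "\<exists>r. \<forall>i\<in>Basis. i = (\<Sum>b\<in>B. r i b *\<^sub>R b)" by (rule bchoice)
  then obtain r where r0: "\<forall>i\<in>Basis. i = (\<Sum>b\<in>B. r i b *\<^sub>R b)" by blast
  have r: "\<And>i. i \<in> Basis \<Longrightarrow> i = (\<Sum>b\<in>B. r i b *\<^sub>R b)" using r0 by blast
  have "norm w \<le> (\<Sum>i\<in>Basis. \<Sum>b\<in>B. \<bar>r i b\<bar>)" if "w \<in> Bs" for w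
  proof -
    have wb: "0 \<le> w \<bullet> b \<and> w \<bullet> b \<le> 1" if "b \<in> B" for b
    proof -
      have nn: "\<forall>b\<in>B. 0 \<le> w \<bullet> b" using \<open>w \<in> Bs\<close> BS unfolding Bs_def K_def by auto
      have "w \<bullet> b \<le> (\<Sum>b\<in>B. w \<bullet> b)"
        using member_le_sum[of b B "\<lambda>b. w \<bullet> b"] nn that Bfin by auto
      then show ?thesis using nn that \<open>w \<in> Bs\<close> inner_c unfolding Bs_def by auto
    qed
    have "norm w \<le> (\<Sum>i\<in>Basis. \<bar>w \<bullet> i\<bar>)" by (rule norm_le_l1)
    also have "\<dots> \<le> (\<Sum>i\<in>Basis. \<Sum>b\<in>B. \<bar>r i b\<bar>)"
    proof (rule sum_mono)
      fix i :: 'a assume i: "i \<in> Basis"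
      have "\<bar>w \<bullet> i\<bar> = \<bar>\<Sum>b\<in>B. r i b * (w \<bullet> b)\<bar>"
        by (subst r[OF i]) (simp add: inner_sum_right)
      also have "\<dots> \<le> (\<Sum>b\<in>B. \<bar>r i b * (w \<bullet> b)\<bar>)" by (rule sum_abs)
      also have "\<dots> \<le> (\<Sum>b\<in>B. \<bar>r i b\<bar>)"
        by (rule sum_mono) (use wb in \<open>auto simp: abs_mult intro: mult_left_le\<close>)
      finally show "\<bar>w \<bullet> i\<bar> \<le> (\<Sum>b\<in>B. \<bar>r i b\<bar>)" .
    qed
    finally show ?thesis .
  qed
  then show ?thesis unfolding bounded_iff by blast
qed

lemma Bs_closed: "closed Bs"
proof -
  have "Bs = (\<Inter>s\<in>S. {w. 0 \<le> w \<bullet> s}) \<inter> {w. w \<bullet> c = 1}"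
    unfolding Bs_def K_def by auto
  moreover have "closed \<dots>"
    by (intro closed_Int closed_INT ballI closed_Collect_le closed_Collect_eq continuous_intros)
  ultimately show ?thesis by simp
qed

lemma Bs_convex: "convex Bs"
  unfolding convex_def Bs_def K_def
  by (auto simp: inner_add_left intro!: add_nonneg_nonneg mult_nonneg_nonneg)

lemma Bs_compact: "compact Bs"
  using Bs_bounded Bs_closed compact_eq_bounded_closed by blast

definition "vecf f = (\<Sum>i\<in>Basis. f i *\<^sub>R i)"

lemma vecf_rep: assumes "linear f" shows "f = (\<lambda>v. vecf f \<bullet> v)"
proof
  fix x
  have "f x = f x \<bullet> (1::real)" by simp
  also have "\<dots> = (\<Sum>i\<in>Basis. (x\<bullet>i) * (f i \<bullet> 1))" by (rule Linear_Algebra.linear_componentwise[OF assms])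
  also have "\<dots> = vecf f \<bullet> x" unfolding vecf_def inner_sum_left by (auto intro!: sum.cong simp: inner_commute)
  finally show "f x = vecf f \<bullet> x" .
qed

lemma vecf_effect: assumes "effect S e" shows "vecf e \<in> K" "e = (\<lambda>v. vecf e \<bullet> v)" "e s = vecf e \<bullet> s"
proof -
  have l: "linear e" using assms unfolding effect_def by auto
  show e: "e = (\<lambda>v. vecf e \<bullet> v)" by (rule vecf_rep[OF l])
  show "e s = vecf e \<bullet> s" using fun_cong[OF e, of s] by (simp only:)
  have er: "e s = vecf e \<bullet> s" for s using fun_cong[OF e, of s] by (simp only:)
  have "\<forall>s\<in>S. 0 \<le> e s" using assms unfolding effect_def by auto
  then show "vecf e \<in> K" unfolding K_def by (simp only: er mem_Collect_eq)
qed

lemma lin_inner: "linear (\<lambda>v. a * (w \<bullet> (v::'a)))"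
  by (simp add: linear_iff inner_add_right algebra_simps)

lemma EP_Bs: "w \<in> EP \<Longrightarrow> w \<in> Bs"
  unfolding EP_def extreme_point_of_def by auto

lemma KM: assumes "w \<in> Bs"
  shows "\<exists>F \<mu>. finite F \<and> F \<subseteq> EP \<and> (\<forall>x\<in>F. 0 \<le> \<mu> x) \<and> sum \<mu> F = 1 \<and> (\<Sum>x\<in>F. \<mu> x *\<^sub>R x) = w"
proof -
  have "w \<in> convex hull EP"
    using Krein_Milman_Minkowski[OF Bs_compact Bs_convex] assms unfolding EP_def by auto
  then have "w \<in> {y. \<exists>S u. finite S \<and> S \<subseteq> EP \<and> (\<forall>x\<in>S. 0 \<le> u x) \<and> sum u S = 1 \<and> sum (\<lambda>v. u v *\<^sub>R v) S = y}"
    by (simp only: convex_hull_explicit)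
  then show ?thesis by (simp only: mem_Collect_eq)
qed

lemma DEC: assumes "v \<in> K"
  shows "\<exists>F \<kappa>. finite F \<and> F \<subseteq> EP \<and> (\<forall>x\<in>F. 0 \<le> \<kappa> x) \<and> v = (\<Sum>x\<in>F. \<kappa> x *\<^sub>R x)"
proof (cases "v \<bullet> c = 0")
  case True
  then have "v = 0" using pointed assms by auto
  then show ?thesis by (intro exI[of _ "{}"]) auto
next
  case False
  define a where "a = v \<bullet> c"
  have a: "a > 0" using False K_c_nonneg[OF assms] a_def by auto
  have k: "(1/a) *\<^sub>R v \<in> K" using assms a unfolding K_def by simp
  have "((1/a) *\<^sub>R v) \<bullet> c = 1" using a unfolding a_def by simp
  then have "(1/a) *\<^sub>R v \<in> Bs" using k unfolding Bs_def by simp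
  from KM[OF this] obtain F \<mu> where F: "finite F" "F \<subseteq> EP" "\<forall>x\<in>F. 0 \<le> \<mu> x" "(\<Sum>x\<in>F. \<mu> x *\<^sub>R x) = (1/a) *\<^sub>R v"
    by blast
  have "v = a *\<^sub>R ((1/a) *\<^sub>R v)" using a by simp
  also have "\<dots> = (\<Sum>x\<in>F. (a * \<mu> x) *\<^sub>R x)" by (simp add: F(4)[symmetric] scaleR_sum_right)
  finally show ?thesis using F a by (intro exI[of _ F] exI[of _ "\<lambda>x. a * \<mu> x"]) auto
qed

lemma ray: assumes "w \<in> EP" "v1 \<in> K" "v2 \<in> K" "w = v1 + v2"
  shows "v1 = (v1 \<bullet> c) *\<^sub>R w"
proof -
  have wB: "w \<in> Bs" using EP_Bs assms(1) by auto
  have sum1: "v1 \<bullet> c + v2 \<bullet> c = 1" using wB assms(4) unfolding Bs_def by (simp add: inner_add_left)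
  show ?thesis
  proof (cases "v1 \<bullet> c = 0")
    case True then show ?thesis using pointed assms(2) by auto
  next
    case F1: False
    show ?thesis
    proof (cases "v2 \<bullet> c = 0")
      case True
      then have "v2 = 0" using pointed assms(3) by auto
      then show ?thesis using True sum1 assms(4) by auto
    next
      case F2: False
      define a1 where "a1 = v1 \<bullet> c"
      define a2 where "a2 = v2 \<bullet> c"
      have a1: "a1 > 0" using F1 K_c_nonneg[OF assms(2)] a1_def by auto
      have a2: "a2 > 0" using F2 K_c_nonneg[OF assms(3)] a2_def by auto
      have s: "a1 + a2 = 1" using sum1 a1_def a2_def by auto
      define x1 where "x1 = (1/a1) *\<^sub>R v1"
      define x2 where "x2 = (1/a2) *\<^sub>R v2"
      have x1: "x1 \<in> Bs" using assms(2) a1 unfolding Bs_def K_def x1_def a1_def by auto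
      have x2: "x2 \<in> Bs" using assms(3) a2 unfolding Bs_def K_def x2_def a2_def by auto
      have wx: "w = (1 - a2) *\<^sub>R x1 + a2 *\<^sub>R x2"
      proof -
        have "1 - a2 = a1" using s by simp
        then show ?thesis using a1 a2 assms(4) unfolding x1_def x2_def by simp
      qed
      have "x1 = x2"
      proof (rule ccontr)
        assume "x1 \<noteq> x2"
        then have "w \<in> open_segment x1 x2" unfolding in_segment(2)
          using wx a1 a2 s by (intro conjI exI[of _ a2]) auto
        then show False using assms(1) x1 x2 unfolding EP_def extreme_point_of_def by blast
      qed
      then have "w = x1" using wx by (simp add: algebra_simps)
      then show ?thesis using a1 unfolding x1_def a1_def by simp
    qed
  qed
qed

lemma mx_attain: "\<exists>s\<in>S. mx w = w \<bullet> s \<and> (\<forall>t\<in>S. w \<bullet> t \<le> mx w)"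
proof -
  have "continuous_on S (\<lambda>s. w \<bullet> s)" by (intro continuous_intros)
  then obtain s where s: "s \<in> S" "\<forall>t\<in>S. w \<bullet> t \<le> w \<bullet> s"
    using continuous_attains_sup[OF Scomp Sne] by blast
  have "mx w = w \<bullet> s" unfolding mx_def by (rule cSup_eq_maximum) (use s in auto)
  then show ?thesis using s by auto
qed

lemma mx_pos: assumes "w \<in> Bs" shows "mx w > 0"
proof -
  have "(\<Sum>b\<in>B. w \<bullet> b) = 1" using assms inner_c unfolding Bs_def by auto
  then obtain b where b: "b \<in> B" "w \<bullet> b > 0"
    by (metis not_le sum_nonpos zero_less_one)
  then show ?thesis using mx_attain[of w] BS by force
qed

lemma ray_indec: assumes "w \<in> EP" "a > 0" "\<forall>s\<in>S. a * (w \<bullet> s) \<le> 1"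
  shows "indecomposable_effect S (\<lambda>v. a * (w \<bullet> v))"
proof -
  have wB: "w \<in> Bs" using EP_Bs assms(1) by auto
  have wK: "w \<in> K" using wB unfolding Bs_def by auto
  have eff: "effect S (\<lambda>v. a * (w \<bullet> v))"
    unfolding effect_def using lin_inner assms wK unfolding K_def by auto
  have nz: "(\<lambda>v. a * (w \<bullet> v)) \<noteq> (\<lambda>_. 0)"
  proof
    assume "(\<lambda>v. a * (w \<bullet> v)) = (\<lambda>_. 0)"
    then have "a * (w \<bullet> w) = 0" using fun_cong[of "\<lambda>v. a * (w \<bullet> v)" "\<lambda>_. 0" w] by (simp only:)
    then have "w = 0" using assms(2) by auto
    then show False using wB unfolding Bs_def by auto
  qed
  have key: "\<exists>c1>0. (\<lambda>v. a * (w \<bullet> v)) = (\<lambda>v. c1 * e1 v)"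
    if e1: "effect S e1" "e1 \<noteq> (\<lambda>_. 0)" and e2: "effect S e2"
      and eq: "(\<lambda>v. a * (w \<bullet> v)) = (\<lambda>v. e1 v + e2 v)" for e1 e2
  proof -
    define w1 where "w1 = vecf e1"
    define w2 where "w2 = vecf e2"
    have w1K: "w1 \<in> K" using vecf_effect(1)[OF e1(1)] unfolding w1_def .
    have r1: "e1 = (\<lambda>v. w1 \<bullet> v)" using vecf_effect(2)[OF e1(1)] unfolding w1_def .
    have w2K: "w2 \<in> K" using vecf_effect(1)[OF e2] unfolding w2_def .
    have r2: "e2 = (\<lambda>v. w2 \<bullet> v)" using vecf_effect(2)[OF e2] unfolding w2_def .
    have "\<forall>v. (a *\<^sub>R w) \<bullet> v = (w1 + w2) \<bullet> v"
    proof
      fix v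
      have "a * (w \<bullet> v) = e1 v + e2 v" using fun_cong[OF eq, of v] by (simp only:)
      then show "(a *\<^sub>R w) \<bullet> v = (w1 + w2) \<bullet> v" using r1 r2 by (simp add: inner_add_left)
    qed
    then have aw: "a *\<^sub>R w = w1 + w2" using vector_eq_rdot by blast
    have "w = (1/a) *\<^sub>R (a *\<^sub>R w)" using assms(2) by simp
    also have "\<dots> = (1/a) *\<^sub>R w1 + (1/a) *\<^sub>R w2" using aw by (simp add: scaleR_right_distrib)
    finally have "w = (1/a) *\<^sub>R w1 + (1/a) *\<^sub>R w2" .
    moreover have "(1/a) *\<^sub>R w1 \<in> K" "(1/a) *\<^sub>R w2 \<in> K" using w1K w2K assms(2) unfolding K_def by auto
    ultimately have R: "(1/a) *\<^sub>R w1 = (((1/a) *\<^sub>R w1) \<bullet> c) *\<^sub>R w"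
      using ray assms(1) by blast
    have "w1 \<noteq> 0" using e1(2) r1 by auto
    then have pos: "w1 \<bullet> c > 0" using pointed[OF w1K] K_c_nonneg[OF w1K] by force
    define \<beta> where "\<beta> = w1 \<bullet> c / a"
    have \<beta>: "\<beta> > 0" using pos assms(2) \<beta>_def by auto
    have "((1/a) *\<^sub>R w1) \<bullet> c = \<beta>" unfolding \<beta>_def by simp
    then have R': "(1/a) *\<^sub>R w1 = \<beta> *\<^sub>R w" using R by simp
    have "w1 = a *\<^sub>R ((1/a) *\<^sub>R w1)" using assms(2) by simp
    also have "\<dots> = (a * \<beta>) *\<^sub>R w" using R' by simp
    finally have "w1 = (a * \<beta>) *\<^sub>R w" .
    then have "(\<lambda>v. a * (w \<bullet> v)) = (\<lambda>v. (1/\<beta>) * e1 v)" using \<beta> unfolding r1 by auto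
    then show ?thesis using \<beta> by (intro exI[of _ "1/\<beta>"]) auto
  qed
  show ?thesis unfolding indecomposable_effect_def
  proof (intro conjI eff nz allI impI)
    fix e1 e2 assume h: "effect S e1 \<and> effect S e2 \<and> e1 \<noteq> (\<lambda>_. 0) \<and> e2 \<noteq> (\<lambda>_. 0) \<and>
       (\<lambda>v. a * (w \<bullet> v)) = (\<lambda>v. e1 v + e2 v)"
    obtain c1 where "c1 > 0" "(\<lambda>v. a * (w \<bullet> v)) = (\<lambda>v. c1 * e1 v)" using key h by blast
    moreover obtain c2 where "c2 > 0" "(\<lambda>v. a * (w \<bullet> v)) = (\<lambda>v. c2 * e2 v)"
      using key[of e2 e1] h by (auto simp: add.commute)
    ultimately show "\<exists>c1 c2. 0 < c1 \<and> 0 < c2 \<and> (\<lambda>v. a * (w \<bullet> v)) = (\<lambda>v. c1 * e1 v) \<and>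
       (\<lambda>v. a * (w \<bullet> v)) = (\<lambda>v. c2 * e2 v)" by blast
  qed
qed

lemma ray_pure: assumes "w \<in> EP" shows "pure_effect S (\<lambda>v. (1 / mx w) * (w \<bullet> v))"
proof -
  have wB: "w \<in> Bs" using EP_Bs assms(1) by auto
  have wK: "w \<in> K" using wB unfolding Bs_def by auto
  define m where "m = mx w"
  have m: "m > 0" using mx_pos[OF wB] m_def by auto
  obtain ss where ss: "ss \<in> S" "m = w \<bullet> ss" "\<forall>t\<in>S. w \<bullet> t \<le> m" using mx_attain[of w] m_def by auto
  have eff: "effect S (\<lambda>v. (1 / m) * (w \<bullet> v))"
    unfolding effect_def
  proof (intro conjI ballI)
    show "linear (\<lambda>v. (1 / m) * (w \<bullet> v))" by (rule lin_inner)
  next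
    fix s assume s: "s \<in> S"
    show "0 \<le> (1 / m) * (w \<bullet> s)" using wK s m unfolding K_def by auto
  next
    fix s assume s: "s \<in> S"
    show "(1 / m) * (w \<bullet> s) \<le> 1" using ss(3) s m by (simp add: field_simps)
  qed
  have False if e1: "effect S e1" and e2: "effect S e2" and ne: "e1 \<noteq> e2" and t: "0 < t" "t < 1"
     and eq: "(\<lambda>v. (1 / m) * (w \<bullet> v)) = (\<lambda>v. t * e1 v + (1 - t) * e2 v)" for e1 e2 t
  proof -
    define w1 where "w1 = vecf e1"
    define w2 where "w2 = vecf e2"
    have w1K: "w1 \<in> K" using vecf_effect(1)[OF e1(1)] unfolding w1_def .
    have r1: "e1 = (\<lambda>v. w1 \<bullet> v)" using vecf_effect(2)[OF e1(1)] unfolding w1_def .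
    have w2K: "w2 \<in> K" using vecf_effect(1)[OF e2] unfolding w2_def .
    have r2: "e2 = (\<lambda>v. w2 \<bullet> v)" using vecf_effect(2)[OF e2] unfolding w2_def .
    have "\<forall>v. w \<bullet> v = ((m * t) *\<^sub>R w1 + (m * (1 - t)) *\<^sub>R w2) \<bullet> v"
    proof
      fix v
      have "(1 / m) * (w \<bullet> v) = t * e1 v + (1 - t) * e2 v" using fun_cong[OF eq, of v] by (simp only:)
      then have "(1 / m) * (w \<bullet> v) = t * (w1 \<bullet> v) + (1 - t) * (w2 \<bullet> v)" using r1 r2 by simp
      then have "w \<bullet> v = m * (t * (w1 \<bullet> v) + (1 - t) * (w2 \<bullet> v))" using m by (simp add: field_simps)
      then show "w \<bullet> v = ((m * t) *\<^sub>R w1 + (m * (1 - t)) *\<^sub>R w2) \<bullet> v" by (simp add: inner_add_left algebra_simps)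
    qed
    then have wd: "w = (m * t) *\<^sub>R w1 + (m * (1 - t)) *\<^sub>R w2" using vector_eq_rdot by blast
    have k1: "(m * t) *\<^sub>R w1 \<in> K" using w1K m t unfolding K_def by auto
    have k2: "(m * (1 - t)) *\<^sub>R w2 \<in> K" using w2K m t unfolding K_def by auto
    define \<alpha> where "\<alpha> = ((m * t) *\<^sub>R w1) \<bullet> c"
    define \<beta> where "\<beta> = ((m * (1 - t)) *\<^sub>R w2) \<bullet> c"
    have R1: "(m * t) *\<^sub>R w1 = \<alpha> *\<^sub>R w" unfolding \<alpha>_def by (rule ray[OF assms k1 k2 wd])
    have wd': "w = (m * (1 - t)) *\<^sub>R w2 + (m * t) *\<^sub>R w1" using wd by (simp only: add.commute)
    have R2: "(m * (1 - t)) *\<^sub>R w2 = \<beta> *\<^sub>R w" unfolding \<beta>_def by (rule ray[OF assms k2 k1 wd'])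
    have ab: "\<alpha> + \<beta> = 1" using wB wd unfolding Bs_def \<alpha>_def \<beta>_def by (simp add: inner_add_left)
    have "(m * t) * (w1 \<bullet> ss) = \<alpha> * m" using arg_cong[OF R1, of "\<lambda>x. x \<bullet> ss"] ss(2) by simp
    moreover have "w1 \<bullet> ss \<le> 1" using e1 ss(1) r1 unfolding effect_def by auto
    ultimately have "\<alpha> * m \<le> t * m"
      using mult_left_mono[of "w1 \<bullet> ss" 1 "m*t"] m t by (simp add: mult.commute)
    then have a: "\<alpha> \<le> t" using m by auto
    have "(m * (1 - t)) * (w2 \<bullet> ss) = \<beta> * m" using arg_cong[OF R2, of "\<lambda>x. x \<bullet> ss"] ss(2) by simp
    moreover have "w2 \<bullet> ss \<le> 1" using e2 ss(1) r2 unfolding effect_def by auto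
    ultimately have "\<beta> * m \<le> (1 - t) * m"
      using mult_left_mono[of "w2 \<bullet> ss" 1 "m*(1-t)"] m t by (simp add: mult.commute)
    then have b: "\<beta> \<le> 1 - t" using m by auto
    have at: "\<alpha> = t" and bt: "\<beta> = 1 - t" using a b ab by auto
    have "w1 = (1/(m*t)) *\<^sub>R ((m*t) *\<^sub>R w1)" using m t by simp
    also have "\<dots> = (1/m) *\<^sub>R w" using R1 at m t by simp
    finally have "w1 = (1/m) *\<^sub>R w" .
    moreover have "w2 = (1/(m*(1-t))) *\<^sub>R ((m*(1-t)) *\<^sub>R w2)" using m t by simp
    moreover have "(1/(m*(1-t))) *\<^sub>R ((m*(1-t)) *\<^sub>R w2) = (1/m) *\<^sub>R w" using R2 bt m t by simp
    ultimately show False using ne r1 r2 by auto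
  qed
  then show ?thesis unfolding pure_effect_def m_def[symmetric] using eff by blast
qed

end

locale ssp2 = ssp +
  fixes s0 :: 'a and lam0 :: real
  assumes s0S: "s0 \<in> S"
    and H: "\<forall>e. pure_effect S e \<and> indecomposable_effect S e \<longrightarrow> e s0 = lam0"
begin

lemma H': assumes "w \<in> EP" shows "w \<bullet> s0 = lam0 * mx w"
proof -
  have wB: "w \<in> Bs" using EP_Bs assms(1) by auto
  have m: "mx w > 0" using mx_pos[OF wB] by auto
  have le: "\<forall>s\<in>S. (1 / mx w) * (w \<bullet> s) \<le> 1" using mx_attain[of w] m by (auto simp: field_simps)
  have "0 < 1 / mx w" using m by simp
  then have "indecomposable_effect S (\<lambda>v. (1 / mx w) * (w \<bullet> v))"
    by (rule ray_indec[OF assms _ le])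
  then have "(1 / mx w) * (w \<bullet> s0) = lam0" using H ray_pure[OF assms] by blast
  then show ?thesis using m by (simp add: field_simps)
qed

lemma bound: assumes "v \<in> K" shows "\<exists>k\<ge>0. v \<bullet> s0 = lam0 * k \<and> (\<forall>s\<in>S. v \<bullet> s \<le> k)"
proof -
  obtain F \<kappa> where F: "finite F" "F \<subseteq> EP" "\<forall>x\<in>F. 0 \<le> \<kappa> x" "v = (\<Sum>x\<in>F. \<kappa> x *\<^sub>R x)"
    using DEC[OF assms] by blast
  define k where "k = (\<Sum>x\<in>F. \<kappa> x * mx x)"
  have mxp: "x \<in> F \<Longrightarrow> mx x > 0" for x using F(2) EP_Bs mx_pos by auto
  have "k \<ge> 0" unfolding k_def using F(3) mxp by (auto intro!: sum_nonneg simp: less_imp_le)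
  moreover have "v \<bullet> s0 = lam0 * k"
    unfolding F(4) k_def inner_sum_left using H' F(2) by (auto simp: sum_distrib_left intro!: sum.cong)
  moreover have "v \<bullet> s \<le> k" if "s \<in> S" for s
    unfolding F(4) k_def inner_sum_left using F(3) mx_attain that
    by (auto intro!: sum_mono mult_left_mono)
  ultimately show ?thesis by blast
qed

lemma u_eff: "effect S u" unfolding effect_def using ulin u1 by auto

lemma lam0_pos: "lam0 > 0"
proof -
  obtain k where k: "k \<ge> 0" "vecf u \<bullet> s0 = lam0 * k"
    using bound[OF vecf_effect(1)[OF u_eff]] by blast
  have "vecf u \<bullet> s0 = 1" using vecf_effect(3)[OF u_eff, of s0] u1[OF s0S] by simp
  then have "lam0 * k = 1" using k by auto
  show ?thesis
  proof (rule ccontr)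
    assume "\<not> lam0 > 0"
    then have "lam0 * k \<le> 0" using k(1) by (simp add: mult_nonpos_nonneg)
    then show False using \<open>lam0 * k = 1\<close> by simp
  qed
qed

lemma fnorm_le: assumes "effect S e" shows "fnorm S e \<le> e s0 / lam0"
proof -
  obtain k where k: "k \<ge> 0" "vecf e \<bullet> s0 = lam0 * k" "\<forall>s\<in>S. vecf e \<bullet> s \<le> k"
    using bound[OF vecf_effect(1)[OF assms]] by blast
  have r: "e s = vecf e \<bullet> s" for s using vecf_effect(3)[OF assms] .
  have "fnorm S e \<le> k" unfolding fnorm_def
  proof (rule cSUP_least[OF Sne])
    fix s assume s: "s \<in> S"
    then have "0 \<le> e s" using assms unfolding effect_def by auto
    then show "\<bar>e s\<bar> \<le> k" using k(3) s r by simp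
  qed
  also have "k = e s0 / lam0" using k(2) r[of s0] lam0_pos by simp
  finally show ?thesis .
qed

lemma fnorm_ray: assumes "b > 0" "x0 \<in> EP" shows "fnorm S (\<lambda>y. b * (x0 \<bullet> y)) = b * mx x0"
proof -
  have x0K: "x0 \<in> K" using EP_Bs[OF assms(2)] unfolding Bs_def by auto
  obtain ss where ss: "ss \<in> S" "mx x0 = x0 \<bullet> ss" "\<forall>t\<in>S. x0 \<bullet> t \<le> mx x0" using mx_attain[of x0] by auto
  have ab: "\<bar>b * (x0 \<bullet> s)\<bar> = b * (x0 \<bullet> s)" if "s \<in> S" for s
    using x0K that assms(1) unfolding K_def by auto
  show ?thesis unfolding fnorm_def
  proof (rule cSup_eq_maximum)
    show "b * mx x0 \<in> (\<lambda>s. \<bar>b * (x0 \<bullet> s)\<bar>) ` S" using ss ab by force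
  next
    fix y assume "y \<in> (\<lambda>s. \<bar>b * (x0 \<bullet> s)\<bar>) ` S"
    then obtain s where s: "s \<in> S" "y = \<bar>b * (x0 \<bullet> s)\<bar>" by auto
    then show "y \<le> b * mx x0" using ab[OF s(1)] ss(3) assms(1) by (simp add: mult_left_mono)
  qed
qed

lemma indec_fnorm: assumes "indecomposable_effect S e" shows "fnorm S e = e s0 / lam0"
proof -
  have eff: "effect S e" and nz: "e \<noteq> (\<lambda>_. 0)" using assms unfolding indecomposable_effect_def by auto
  define v where "v = vecf e"
  have vK: "v \<in> K" using vecf_effect(1)[OF eff] unfolding v_def .
  have r: "e s = v \<bullet> s" for s using vecf_effect(3)[OF eff] unfolding v_def .
  obtain F \<kappa> where F: "finite F" "F \<subseteq> EP" "\<forall>x\<in>F. 0 \<le> \<kappa> x" "v = (\<Sum>x\<in>F. \<kappa> x *\<^sub>R x)"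
    using DEC[OF vK] by blast
  have FK: "x \<in> K" if "x \<in> F" for x using that F(2) EP_Bs unfolding Bs_def by auto
  have "\<exists>x0\<in>F. \<kappa> x0 \<noteq> 0"
  proof (rule ccontr)
    assume "\<not> (\<exists>x0\<in>F. \<kappa> x0 \<noteq> 0)"
    then have "v = 0" using F(4) by simp
    then have "e = (\<lambda>_. 0)" using r by (simp add: fun_eq_iff)
    then show False using nz by simp
  qed
  then obtain x0 where x0: "x0 \<in> F" "\<kappa> x0 \<noteq> 0" by blast
  define a where "a = \<kappa> x0"
  have a: "a > 0" using x0 F(3) a_def by force
  have x0EP: "x0 \<in> EP" using x0 F(2) by auto
  have x0K: "x0 \<in> K" using FK x0 by auto
  have x0nz: "x0 \<noteq> 0" using EP_Bs[OF x0EP] unfolding Bs_def by auto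
  define v2 where "v2 = (\<Sum>x\<in>F-{x0}. \<kappa> x *\<^sub>R x)"
  have vs: "v = a *\<^sub>R x0 + v2" unfolding F(4) v2_def a_def using sum.remove[OF F(1) x0(1)] by simp
  have v2nn: "0 \<le> v2 \<bullet> s" if "s \<in> S" for s
    unfolding v2_def inner_sum_left using F(3) FK that unfolding K_def by (auto intro!: sum_nonneg)
  have x0nn: "0 \<le> x0 \<bullet> s" if "s \<in> S" for s using x0K that unfolding K_def by auto
  have ele: "e s \<le> 1" if "s \<in> S" for s using eff that unfolding effect_def by auto
  have es: "e s = a * (x0 \<bullet> s) + v2 \<bullet> s" for s using r vs by (simp add: inner_add_left)
  have e1eff: "effect S (\<lambda>y. a * (x0 \<bullet> y))" unfolding effect_def
  proof (intro conjI ballI)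
    show "linear (\<lambda>y. a * (x0 \<bullet> y))" by (rule lin_inner)
  next
    fix s assume s: "s \<in> S" show "0 \<le> a * (x0 \<bullet> s)" using x0nn[OF s] a by simp
  next
    fix s assume s: "s \<in> S" show "a * (x0 \<bullet> s) \<le> 1" using es[of s] ele[OF s] v2nn[OF s] by simp
  qed
  have e2eff: "effect S (\<lambda>y. v2 \<bullet> y)" unfolding effect_def
  proof (intro conjI ballI)
    show "linear (\<lambda>y. v2 \<bullet> y)" using lin_inner[of 1 v2] by simp
  next
    fix s assume s: "s \<in> S" show "0 \<le> v2 \<bullet> s" using v2nn[OF s] .
  next
    fix s assume s: "s \<in> S" show "v2 \<bullet> s \<le> 1" using es[of s] ele[OF s] x0nn[OF s] a by (smt (verit) mult_nonneg_nonneg)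
  qed
  have e1nz: "(\<lambda>y. a * (x0 \<bullet> y)) \<noteq> (\<lambda>_. 0)"
  proof
    assume "(\<lambda>y. a * (x0 \<bullet> y)) = (\<lambda>_. 0)"
    then have "a * (x0 \<bullet> x0) = 0" using fun_cong[of "\<lambda>y. a * (x0 \<bullet> y)" "\<lambda>_. 0" x0] by (simp only:)
    then show False using a x0nz by simp
  qed
  have eeq: "e = (\<lambda>y. a * (x0 \<bullet> y) + v2 \<bullet> y)" using es by (simp add: fun_eq_iff)
  have "\<exists>b>0. e = (\<lambda>y. b * (x0 \<bullet> y))"
  proof (cases "(\<lambda>y. v2 \<bullet> y) = (\<lambda>_. 0)")
    case True
    then have "e = (\<lambda>y. a * (x0 \<bullet> y))" using eeq by (simp add: fun_eq_iff)
    then show ?thesis using a by blast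
  next
    case False
    then obtain c1 where c1: "c1 > 0" "e = (\<lambda>v. c1 * (a * (x0 \<bullet> v)))"
      using assms e1eff e2eff e1nz eeq unfolding indecomposable_effect_def by blast
    then have "e = (\<lambda>y. (c1 * a) * (x0 \<bullet> y))" by (simp add: fun_eq_iff)
    then show ?thesis using c1 a by (intro exI[of _ "c1 * a"]) auto
  qed
  then obtain b where b: "b > 0" "e = (\<lambda>y. b * (x0 \<bullet> y))" by blast
  have "fnorm S e = b * mx x0" unfolding b(2) by (rule fnorm_ray[OF b(1) x0EP])
  moreover have "e s0 = b * (lam0 * mx x0)" unfolding b(2) using H'[OF x0EP] by simp
  ultimately show ?thesis using lam0_pos by simp
qed

lemma part1: assumes "indecomposable_measurement S u \<Omega> M" shows "decoding_power S \<Omega> M = 1 / lam0"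
proof -
  have fin: "finite \<Omega>" and eff: "\<forall>x\<in>\<Omega>. effect S (M x)" and sm: "\<forall>v. (\<Sum>x\<in>\<Omega>. M x v) = u v"
    and ind: "\<forall>x\<in>\<Omega>. M x \<noteq> (\<lambda>_. 0) \<longrightarrow> indecomposable_effect S (M x)"
    using assms unfolding indecomposable_measurement_def measurement_def by auto
  have "fnorm S (M x) = M x s0 / lam0" if x: "x \<in> \<Omega>" for x
  proof (cases "M x = (\<lambda>_. 0)")
    case True
    then show ?thesis unfolding fnorm_def using Sne by simp
  next
    case False
    then show ?thesis using indec_fnorm ind x by blast
  qed
  then have "decoding_power S \<Omega> M = (\<Sum>x\<in>\<Omega>. M x s0 / lam0)" unfolding decoding_power_def
    by (rule sum.cong[OF refl])
  also have "\<dots> = (\<Sum>x\<in>\<Omega>. M x s0) / lam0" by (rule sum_divide_distrib[symmetric])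
  also have "\<dots> = 1 / lam0" using sm u1[OF s0S] by simp
  finally show ?thesis .
qed

lemma part2: "info_storability S u = 1 / lam0"
  unfolding info_storability_def
proof (rule cSup_eq_maximum)
  fix d assume "d \<in> {decoding_power S \<Omega> M | (\<Omega> :: nat set) M. measurement S u \<Omega> M}"
  then obtain \<Omega> :: "nat set" and M where d: "d = decoding_power S \<Omega> M" and m: "measurement S u \<Omega> M" by blast
  have fin: "finite \<Omega>" and eff: "\<forall>x\<in>\<Omega>. effect S (M x)" and sm: "\<forall>v. (\<Sum>x\<in>\<Omega>. M x v) = u v"
    using m unfolding measurement_def by auto
  have "d \<le> (\<Sum>x\<in>\<Omega>. M x s0 / lam0)" unfolding d decoding_power_def
    by (rule sum_mono) (use fnorm_le eff in blast)
  also have "\<dots> = (\<Sum>x\<in>\<Omega>. M x s0) / lam0" by (rule sum_divide_distrib[symmetric])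
  also have "\<dots> = 1 / lam0" using sm u1[OF s0S] by simp
  finally show "d \<le> 1 / lam0" .
next
  obtain F \<kappa> where F: "finite F" "F \<subseteq> EP" "\<forall>x\<in>F. 0 \<le> \<kappa> x" "vecf u = (\<Sum>x\<in>F. \<kappa> x *\<^sub>R x)"
    using DEC[OF vecf_effect(1)[OF u_eff]] by blast
  have FK: "x \<in> K" if "x \<in> F" for x using that F(2) EP_Bs unfolding Bs_def by auto
  obtain h where h: "bij_betw h {0..<card F} F" using ex_bij_betw_nat_finite[OF F(1)] by blast
  define M where "M = (\<lambda>i y. \<kappa> (h i) * (h i \<bullet> y))"
  have hF: "i \<in> {0..<card F} \<Longrightarrow> h i \<in> F" for i using h bij_betwE by blast
  have us: "u y = (\<Sum>x\<in>F. \<kappa> x * (x \<bullet> y))" for y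
    using vecf_effect(3)[OF u_eff, of y] F(4) by (simp add: inner_sum_left)
  have termnn: "0 \<le> \<kappa> x * (x \<bullet> s)" if "x \<in> F" "s \<in> S" for x s
    using F(3) FK that unfolding K_def by auto
  have Mle: "M i s \<le> 1" if "i \<in> {0..<card F}" "s \<in> S" for i s
  proof -
    have "M i s \<le> (\<Sum>x\<in>F. \<kappa> x * (x \<bullet> s))" unfolding M_def
      by (rule member_le_sum[OF hF[OF that(1)]]) (use termnn that(2) F(1) in auto)
    also have "\<dots> = 1" using us[of s] u1[OF that(2)] by simp
    finally show ?thesis .
  qed
  have meas: "measurement S u {0..<card F} M" unfolding measurement_def
  proof (intro conjI ballI allI)
    show "finite {0..<card F}" by simp
  next
    fix i assume i: "i \<in> {0..<card F}"
    show "effect S (M i)" unfolding effect_def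
    proof (intro conjI ballI)
      show "linear (M i)" unfolding M_def by (rule lin_inner)
    next
      fix s assume "s \<in> S" then show "0 \<le> M i s" unfolding M_def using termnn hF[OF i] by auto
    next
      fix s assume "s \<in> S" then show "M i s \<le> 1" using Mle i by auto
    qed
  next
    fix v
    have "(\<Sum>i\<in>{0..<card F}. M i v) = (\<Sum>x\<in>F. \<kappa> x * (x \<bullet> v))" unfolding M_def
      by (rule sum.reindex_bij_betw[OF h, of "\<lambda>x. \<kappa> x * (x \<bullet> v)"])
    then show "(\<Sum>i\<in>{0..<card F}. M i v) = u v" using us by simp
  qed
  have "indecomposable_measurement S u {0..<card F} M" unfolding indecomposable_measurement_def
  proof (intro conjI meas ballI impI)
    fix i assume i: "i \<in> {0..<card F}" and nz: "M i \<noteq> (\<lambda>_. 0)"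
    have "\<kappa> (h i) \<noteq> 0" using nz unfolding M_def by auto
    then have kp: "\<kappa> (h i) > 0" using F(3) hF[OF i] by force
    have le: "\<forall>s\<in>S. \<kappa> (h i) * (h i \<bullet> s) \<le> 1" using Mle[OF i] unfolding M_def by auto
    have hEP: "h i \<in> EP" using F(2) hF[OF i] by auto
    show "indecomposable_effect S (M i)" unfolding M_def by (rule ray_indec[OF hEP kp le])
  qed
  then have "decoding_power S {0..<card F} M = 1 / lam0" by (rule part1)
  then show "1 / lam0 \<in> {decoding_power S \<Omega> M | (\<Omega> :: nat set) M. measurement S u \<Omega> M}"
    using meas by force
qed

end

theorem proposition3:
  fixes S :: "'a::euclidean_space set" and u :: "'a \<Rightarrow> real"
    and s0 :: 'a and lam0 :: real
  assumes "state_space S u"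
    and "s0 \<in> S"
    and "\<forall>e. pure_effect S e \<and> indecomposable_effect S e \<longrightarrow> e s0 = lam0"
  shows "(\<forall>(\<Omega> :: 'b set) M. indecomposable_measurement S u \<Omega> M \<longrightarrow>
            decoding_power S \<Omega> M = 1 / lam0)
         \<and> info_storability S u = 1 / lam0"
proof -
  from basis_exists[of S] obtain B where B: "B \<subseteq> S" "independent B" "S \<subseteq> span B" .
  have fin: "finite B" using B(2) by (rule finiteI_independent)
  have "span S = UNIV" using assms(1) unfolding state_space_def by auto
  moreover have "span S \<subseteq> span B" using B(3) by (intro span_minimal subspace_span)
  ultimately have sp: "span B = UNIV" by auto
  have "ssp2 S u B s0 lam0"
    by (intro ssp2.intro ssp.intro ssp2_axioms.intro assms B(1) fin sp)
  then interpret ssp2 S u B s0 lam0 .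
  show ?thesis
  proof (intro conjI allI impI)
    fix \<Omega> :: "'b set" and M
    assume "indecomposable_measurement S u \<Omega> M"
    then show "decoding_power S \<Omega> M = 1 / lam0" by (rule part1)
  next
    show "info_storability S u = 1 / lam0" by (rule part2)
  qed
qed

end
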